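(* If a $\Gamma_3$-contraction $(S_1,S_2,P)$ on a Hilbert space $\mathcal H$ has a $\Gamma_3$-isometric dilation, then it has a minimal $\Gamma_3$-isometric dilation.
   Context: $\Gamma_3=\{(z_1+z_2+z_3,\,z_1z_2+z_2z_3+z_3z_1,\,z_1z_2z_3):|z_i|\le1\}$, $b\Gamma_3$ the same with $|z_i|=1$. A $\Gamma_3$-contraction is a commuting operator triple with Taylor joint spectrum in $\Gamma_3$ and $\|f(S_1,S_2,P)\|\le\sup_{\Gamma_3}|f|$ for rational $f$ with poles off $\Gamma_3$; a $\Gamma_3$-unitary is a commuting normal triple with Taylor joint spectrum in $b\Gamma_3$; a $\Gamma_3$-isometry is the restriction of a $\Gamma_3$-unitary to a common invariant subspace. A $\Gamma_3$-isometric dilation of $(S_1,S_2,P)$ is a $\Gamma_3$-isometry $(T_1,T_2,V)$ on a Hilbert space $\mathcal K\supseteq\mathcal H$ with $P_{\mathcal H}T_1^{m_1}T_2^{m_2}V^n|_{\mathcal H}=S_1^{m_1}S_2^{m_2}P^n$ for all integers $m_1,m_2,n\ge0$; it is minimal if $\mathcal K$ is the closed linear span of $\{T_1^{m_1}T_2^{m_2}V^nh:h\in\mathcal H,\ m_1,m_2,n\ge0\}$. *)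

theory Defs
  imports "HOL-Analysis.Analysis"
begin

text \<open>Hilbert spaces are modelled concretely: every complex Hilbert space is unitarily
equivalent to l2(I) for some index set I, so we work inside the ambient space
l2 of the index type 'i, and Hilbert spaces are closed subspaces of it.
Operators are functions, only their behaviour on the relevant subspace matters.\<close>

definition l2 :: "('i \<Rightarrow> complex) set" where
  "l2 = {x. (\<lambda>i. (cmod (x i))\<^sup>2) summable_on UNIV}"

definition linner :: "('i \<Rightarrow> complex) \<Rightarrow> ('i \<Rightarrow> complex) \<Rightarrow> complex" where
  "linner x y = infsum (\<lambda>i. x i * cnj (y i)) UNIV"

definition lnorm :: "('i \<Rightarrow> complex) \<Rightarrow> real" where
  "lnorm x = sqrt (infsum (\<lambda>i. (cmod (x i))\<^sup>2) UNIV)"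

definition closed_subspace :: "('i \<Rightarrow> complex) set \<Rightarrow> bool" where
  "closed_subspace M \<longleftrightarrow> M \<subseteq> l2 \<and> (\<lambda>_. 0) \<in> M
     \<and> (\<forall>x\<in>M. \<forall>y\<in>M. (\<lambda>i. x i + y i) \<in> M)
     \<and> (\<forall>c. \<forall>x\<in>M. (\<lambda>i. c * x i) \<in> M)
     \<and> (\<forall>X x. (\<forall>n. X n \<in> M) \<and> x \<in> l2 \<and> (\<lambda>n. lnorm (\<lambda>i. X n i - x i)) \<longlonglongrightarrow> 0
              \<longrightarrow> x \<in> M)"

definition op_on :: "('i \<Rightarrow> complex) set \<Rightarrow> (('i \<Rightarrow> complex) \<Rightarrow> ('i \<Rightarrow> complex)) \<Rightarrow> bool" where
  "op_on M T \<longleftrightarrow> (\<forall>x\<in>M. T x \<in> M)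
     \<and> (\<forall>x\<in>M. \<forall>y\<in>M. T (\<lambda>i. x i + y i) = (\<lambda>i. T x i + T y i))
     \<and> (\<forall>c. \<forall>x\<in>M. T (\<lambda>i. c * x i) = (\<lambda>i. c * T x i))
     \<and> (\<exists>C. \<forall>x\<in>M. lnorm (T x) \<le> C * lnorm x)"

definition opnorm :: "('i \<Rightarrow> complex) set \<Rightarrow> (('i \<Rightarrow> complex) \<Rightarrow> ('i \<Rightarrow> complex)) \<Rightarrow> real" where
  "opnorm M T = Sup {lnorm (T x) | x. x \<in> M \<and> lnorm x \<le> 1}"

definition commute_on :: "('i \<Rightarrow> complex) set \<Rightarrow> (('i \<Rightarrow> complex) \<Rightarrow> ('i \<Rightarrow> complex))
    \<Rightarrow> (('i \<Rightarrow> complex) \<Rightarrow> ('i \<Rightarrow> complex)) \<Rightarrow> bool" where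
  "commute_on M S T \<longleftrightarrow> (\<forall>x\<in>M. S (T x) = T (S x))"

definition is_adjoint :: "('i \<Rightarrow> complex) set \<Rightarrow> (('i \<Rightarrow> complex) \<Rightarrow> ('i \<Rightarrow> complex))
    \<Rightarrow> (('i \<Rightarrow> complex) \<Rightarrow> ('i \<Rightarrow> complex)) \<Rightarrow> bool" where
  "is_adjoint M T A \<longleftrightarrow> op_on M A \<and> (\<forall>x\<in>M. \<forall>y\<in>M. linner (T x) y = linner x (A y))"

definition normal_on :: "('i \<Rightarrow> complex) set \<Rightarrow> (('i \<Rightarrow> complex) \<Rightarrow> ('i \<Rightarrow> complex)) \<Rightarrow> bool" where
  "normal_on M T \<longleftrightarrow> op_on M T \<and> (\<exists>A. is_adjoint M T A \<and> commute_on M T A)"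

text \<open>Exactness of the Koszul complex 0 -> M -> M^3 -> M^3 -> M -> 0 of a commuting triple.\<close>
definition koszul_exact :: "('i \<Rightarrow> complex) set \<Rightarrow> (('i \<Rightarrow> complex) \<Rightarrow> ('i \<Rightarrow> complex))
    \<Rightarrow> (('i \<Rightarrow> complex) \<Rightarrow> ('i \<Rightarrow> complex)) \<Rightarrow> (('i \<Rightarrow> complex) \<Rightarrow> ('i \<Rightarrow> complex)) \<Rightarrow> bool" where
  "koszul_exact M A1 A2 A3 \<longleftrightarrow>
     (\<forall>x\<in>M. A1 x = (\<lambda>_. 0) \<and> A2 x = (\<lambda>_. 0) \<and> A3 x = (\<lambda>_. 0) \<longrightarrow> x = (\<lambda>_. 0))
   \<and> (\<forall>y1\<in>M. \<forall>y2\<in>M. \<forall>y3\<in>M.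
        (\<lambda>i. A2 y3 i - A3 y2 i) = (\<lambda>_. 0) \<and> (\<lambda>i. A3 y1 i - A1 y3 i) = (\<lambda>_. 0)
        \<and> (\<lambda>i. A1 y2 i - A2 y1 i) = (\<lambda>_. 0)
        \<longrightarrow> (\<exists>x\<in>M. y1 = A1 x \<and> y2 = A2 x \<and> y3 = A3 x))
   \<and> (\<forall>z1\<in>M. \<forall>z2\<in>M. \<forall>z3\<in>M.
        (\<lambda>i. A1 z1 i + A2 z2 i + A3 z3 i) = (\<lambda>_. 0)
        \<longrightarrow> (\<exists>y1\<in>M. \<exists>y2\<in>M. \<exists>y3\<in>M. z1 = (\<lambda>i. A2 y3 i - A3 y2 i)
               \<and> z2 = (\<lambda>i. A3 y1 i - A1 y3 i) \<and> z3 = (\<lambda>i. A1 y2 i - A2 y1 i)))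
   \<and> (\<forall>w\<in>M. \<exists>z1\<in>M. \<exists>z2\<in>M. \<exists>z3\<in>M. w = (\<lambda>i. A1 z1 i + A2 z2 i + A3 z3 i))"

definition shift_op :: "(('i \<Rightarrow> complex) \<Rightarrow> ('i \<Rightarrow> complex)) \<Rightarrow> complex \<Rightarrow> (('i \<Rightarrow> complex) \<Rightarrow> ('i \<Rightarrow> complex))" where
  "shift_op T l = (\<lambda>x i. T x i - l * x i)"

definition taylor_spectrum :: "('i \<Rightarrow> complex) set \<Rightarrow> (('i \<Rightarrow> complex) \<Rightarrow> ('i \<Rightarrow> complex))
    \<Rightarrow> (('i \<Rightarrow> complex) \<Rightarrow> ('i \<Rightarrow> complex)) \<Rightarrow> (('i \<Rightarrow> complex) \<Rightarrow> ('i \<Rightarrow> complex))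
    \<Rightarrow> (complex \<times> complex \<times> complex) set" where
  "taylor_spectrum M T1 T2 T3 =
     {(l1, l2, l3). \<not> koszul_exact M (shift_op T1 l1) (shift_op T2 l2) (shift_op T3 l3)}"

definition Gamma3 :: "(complex \<times> complex \<times> complex) set" where
  "Gamma3 = {(z1 + z2 + z3, z1 * z2 + z2 * z3 + z3 * z1, z1 * z2 * z3) | z1 z2 z3.
               cmod z1 \<le> 1 \<and> cmod z2 \<le> 1 \<and> cmod z3 \<le> 1}"

definition bGamma3 :: "(complex \<times> complex \<times> complex) set" where
  "bGamma3 = {(z1 + z2 + z3, z1 * z2 + z2 * z3 + z3 * z1, z1 * z2 * z3) | z1 z2 z3.
               cmod z1 = 1 \<and> cmod z2 = 1 \<and> cmod z3 = 1}"

text \<open>Polynomials in three variables as finitely supported coefficient functions.\<close>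
definition mpoly_eval :: "(nat \<times> nat \<times> nat \<Rightarrow> complex) \<Rightarrow> complex \<times> complex \<times> complex \<Rightarrow> complex" where
  "mpoly_eval c z = (case z of (z1, z2, z3) \<Rightarrow>
     (\<Sum>(a, b, d)\<in>{k. c k \<noteq> 0}. c (a, b, d) * z1 ^ a * z2 ^ b * z3 ^ d))"

definition mpoly_op :: "(nat \<times> nat \<times> nat \<Rightarrow> complex) \<Rightarrow> (('i \<Rightarrow> complex) \<Rightarrow> ('i \<Rightarrow> complex))
    \<Rightarrow> (('i \<Rightarrow> complex) \<Rightarrow> ('i \<Rightarrow> complex)) \<Rightarrow> (('i \<Rightarrow> complex) \<Rightarrow> ('i \<Rightarrow> complex))
    \<Rightarrow> ('i \<Rightarrow> complex) \<Rightarrow> ('i \<Rightarrow> complex)" where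
  "mpoly_op c T1 T2 T3 x = (\<lambda>i. \<Sum>(a, b, d)\<in>{k. c k \<noteq> 0}.
      c (a, b, d) * (T1 ^^ a) ((T2 ^^ b) ((T3 ^^ d) x)) i)"

definition op_inverse :: "('i \<Rightarrow> complex) set \<Rightarrow> (('i \<Rightarrow> complex) \<Rightarrow> ('i \<Rightarrow> complex))
    \<Rightarrow> (('i \<Rightarrow> complex) \<Rightarrow> ('i \<Rightarrow> complex))" where
  "op_inverse M Q = (SOME R. \<forall>x\<in>M. R x \<in> M \<and> Q (R x) = x \<and> R (Q x) = x)"

definition gamma3_contraction :: "('i \<Rightarrow> complex) set \<Rightarrow> (('i \<Rightarrow> complex) \<Rightarrow> ('i \<Rightarrow> complex))
    \<Rightarrow> (('i \<Rightarrow> complex) \<Rightarrow> ('i \<Rightarrow> complex)) \<Rightarrow> (('i \<Rightarrow> complex) \<Rightarrow> ('i \<Rightarrow> complex)) \<Rightarrow> bool" where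
  "gamma3_contraction H S1 S2 P \<longleftrightarrow>
     op_on H S1 \<and> op_on H S2 \<and> op_on H P
   \<and> commute_on H S1 S2 \<and> commute_on H S1 P \<and> commute_on H S2 P
   \<and> taylor_spectrum H S1 S2 P \<subseteq> Gamma3
   \<and> (\<forall>p q. finite {k. p k \<noteq> 0} \<and> finite {k. q k \<noteq> 0} \<and> (\<forall>z\<in>Gamma3. mpoly_eval q z \<noteq> 0)
        \<longrightarrow> opnorm H (\<lambda>x. mpoly_op p S1 S2 P (op_inverse H (mpoly_op q S1 S2 P) x))
             \<le> (SUP z\<in>Gamma3. cmod (mpoly_eval p z / mpoly_eval q z)))"

definition gamma3_unitary :: "('i \<Rightarrow> complex) set \<Rightarrow> (('i \<Rightarrow> complex) \<Rightarrow> ('i \<Rightarrow> complex))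
    \<Rightarrow> (('i \<Rightarrow> complex) \<Rightarrow> ('i \<Rightarrow> complex)) \<Rightarrow> (('i \<Rightarrow> complex) \<Rightarrow> ('i \<Rightarrow> complex)) \<Rightarrow> bool" where
  "gamma3_unitary N U1 U2 U3 \<longleftrightarrow>
     normal_on N U1 \<and> normal_on N U2 \<and> normal_on N U3
   \<and> commute_on N U1 U2 \<and> commute_on N U1 U3 \<and> commute_on N U2 U3
   \<and> taylor_spectrum N U1 U2 U3 \<subseteq> bGamma3"

definition gamma3_isometry :: "('i \<Rightarrow> complex) set \<Rightarrow> (('i \<Rightarrow> complex) \<Rightarrow> ('i \<Rightarrow> complex))
    \<Rightarrow> (('i \<Rightarrow> complex) \<Rightarrow> ('i \<Rightarrow> complex)) \<Rightarrow> (('i \<Rightarrow> complex) \<Rightarrow> ('i \<Rightarrow> complex)) \<Rightarrow> bool" where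
  "gamma3_isometry K T1 T2 T3 \<longleftrightarrow> closed_subspace K \<and>
     (\<exists>N U1 U2 U3. closed_subspace N \<and> K \<subseteq> N \<and> gamma3_unitary N U1 U2 U3
        \<and> (\<forall>x\<in>K. U1 x \<in> K \<and> U2 x \<in> K \<and> U3 x \<in> K)
        \<and> (\<forall>x\<in>K. T1 x = U1 x \<and> T2 x = U2 x \<and> T3 x = U3 x))"

definition orth_proj :: "('i \<Rightarrow> complex) set \<Rightarrow> ('i \<Rightarrow> complex) \<Rightarrow> ('i \<Rightarrow> complex)" where
  "orth_proj H y = (THE z. z \<in> H \<and> (\<forall>w\<in>H. linner (\<lambda>i. y i - z i) w = 0))"

definition gamma3_isometric_dilation :: "('i \<Rightarrow> complex) set \<Rightarrow> (('i \<Rightarrow> complex) \<Rightarrow> ('i \<Rightarrow> complex))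
    \<Rightarrow> (('i \<Rightarrow> complex) \<Rightarrow> ('i \<Rightarrow> complex)) \<Rightarrow> (('i \<Rightarrow> complex) \<Rightarrow> ('i \<Rightarrow> complex))
    \<Rightarrow> ('i \<Rightarrow> complex) set \<Rightarrow> (('i \<Rightarrow> complex) \<Rightarrow> ('i \<Rightarrow> complex))
    \<Rightarrow> (('i \<Rightarrow> complex) \<Rightarrow> ('i \<Rightarrow> complex)) \<Rightarrow> (('i \<Rightarrow> complex) \<Rightarrow> ('i \<Rightarrow> complex)) \<Rightarrow> bool" where
  "gamma3_isometric_dilation H S1 S2 P K T1 T2 V \<longleftrightarrow>
     closed_subspace K \<and> H \<subseteq> K \<and> gamma3_isometry K T1 T2 V
   \<and> (\<forall>m1 m2 n. \<forall>h\<in>H.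
        orth_proj H ((T1 ^^ m1) ((T2 ^^ m2) ((V ^^ n) h))) = (S1 ^^ m1) ((S2 ^^ m2) ((P ^^ n) h)))"

definition closed_span :: "('i \<Rightarrow> complex) set \<Rightarrow> ('i \<Rightarrow> complex) set" where
  "closed_span G = \<Inter>{M. closed_subspace M \<and> G \<subseteq> M}"

definition minimal_dilation :: "('i \<Rightarrow> complex) set \<Rightarrow> ('i \<Rightarrow> complex) set
    \<Rightarrow> (('i \<Rightarrow> complex) \<Rightarrow> ('i \<Rightarrow> complex))
    \<Rightarrow> (('i \<Rightarrow> complex) \<Rightarrow> ('i \<Rightarrow> complex)) \<Rightarrow> (('i \<Rightarrow> complex) \<Rightarrow> ('i \<Rightarrow> complex)) \<Rightarrow> bool" where
  "minimal_dilation H K T1 T2 V \<longleftrightarrow>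
     K = closed_span {(T1 ^^ m1) ((T2 ^^ m2) ((V ^^ n) h)) | m1 m2 n h. h \<in> H}"

end

theory Submission
  imports Defs
begin

lemma lnorm_nonneg: "lnorm x \<ge> 0"
  unfolding lnorm_def by (simp add: infsum_nonneg)

lemma cs_min: "closed_subspace M \<Longrightarrow> G \<subseteq> M \<Longrightarrow> closed_span G \<subseteq> M"
  unfolding closed_span_def by blast

lemma cs_base: "G \<subseteq> closed_span G"
  unfolding closed_span_def by blast

lemma cs_mem: "x \<in> closed_span G \<longleftrightarrow> (\<forall>M. closed_subspace M \<and> G \<subseteq> M \<longrightarrow> x \<in> M)"
  unfolding closed_span_def by blast

lemma op_add: "op_on N U \<Longrightarrow> x \<in> N \<Longrightarrow> y \<in> N \<Longrightarrow> U (\<lambda>i. x i + y i) = (\<lambda>i. U x i + U y i)"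
  unfolding op_on_def by blast

lemma op_scale: "op_on N U \<Longrightarrow> x \<in> N \<Longrightarrow> U (\<lambda>i. c * x i) = (\<lambda>i. c * U x i)"
  unfolding op_on_def by blast

lemma csub_zero: "closed_subspace M \<Longrightarrow> (\<lambda>_. 0) \<in> M"
  unfolding closed_subspace_def by blast
lemma csub_add: "closed_subspace M \<Longrightarrow> x \<in> M \<Longrightarrow> y \<in> M \<Longrightarrow> (\<lambda>i. x i + y i) \<in> M"
  unfolding closed_subspace_def by blast
lemma csub_scale: "closed_subspace M \<Longrightarrow> x \<in> M \<Longrightarrow> (\<lambda>i. c * x i) \<in> M"
  unfolding closed_subspace_def by blast
lemma csub_lim: "closed_subspace M \<Longrightarrow> (\<forall>n. X n \<in> M) \<Longrightarrow> x \<in> l2 \<Longrightarrow>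
   (\<lambda>n. lnorm (\<lambda>i. X n i - x i)) \<longlonglongrightarrow> 0 \<Longrightarrow> x \<in> M"
  unfolding closed_subspace_def by blast

lemma csub_l2: "closed_subspace M \<Longrightarrow> M \<subseteq> l2"
  unfolding closed_subspace_def by blast

lemma cs_closed:
  assumes K: "closed_subspace K" and GK: "G \<subseteq> K"
  shows "closed_subspace (closed_span G)"
proof -
  have l: "closed_span G \<subseteq> l2" using cs_min[OF K GK] csub_l2[OF K] by blast
  show ?thesis
    unfolding closed_subspace_def[of "closed_span G"]
  proof (intro conjI l ballI allI impI)
    show "(\<lambda>_. 0) \<in> closed_span G" unfolding cs_mem using csub_zero by blast
    fix x y assume "x \<in> closed_span G" "y \<in> closed_span G"
    then show "(\<lambda>i. x i + y i) \<in> closed_span G" unfolding cs_mem using csub_add by blast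
  next
    fix c x assume "x \<in> closed_span G"
    then show "(\<lambda>i. c * x i) \<in> closed_span G" unfolding cs_mem using csub_scale by blast
  next
    fix X x assume a: "(\<forall>n. X n \<in> closed_span G) \<and> x \<in> l2 \<and> (\<lambda>n. lnorm (\<lambda>i. X n i - x i)) \<longlonglongrightarrow> 0"
    show "x \<in> closed_span G" unfolding cs_mem
    proof (intro allI impI)
      fix M assume M: "closed_subspace M \<and> G \<subseteq> M"
      have "\<forall>n. X n \<in> M" using a M unfolding cs_mem by blast
      thus "x \<in> M" using csub_lim M a by blast
    qed
  qed
qed

lemma op_sub:
  assumes "op_on N U" "x \<in> N" "y \<in> N" "closed_subspace N"
  shows "U (\<lambda>i. x i - y i) = (\<lambda>i. U x i - U y i)"
proof -
  have y': "(\<lambda>i. (-1) * y i) \<in> N" by (rule csub_scale[OF assms(4,3)])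
  have "U (\<lambda>i. x i + (\<lambda>i. (-1) * y i) i) = (\<lambda>i. U x i + U (\<lambda>i. (-1) * y i) i)"
    by (rule op_add[OF assms(1,2) y'])
  moreover have "U (\<lambda>i. (-1) * y i) = (\<lambda>i. (-1) * U y i)"
    by (rule op_scale[OF assms(1,3)])
  ultimately show ?thesis by simp
qed

lemma cs_invariant:
  assumes N: "closed_subspace N" and U: "op_on N U" and K: "closed_subspace K"
    and KN: "K \<subseteq> N" and GK: "G \<subseteq> K" and UG: "\<forall>g\<in>G. U g \<in> closed_span G"
  shows "\<forall>x\<in>closed_span G. U x \<in> closed_span G"
proof -
  define C where "C = closed_span G"
  have C: "closed_subspace C" unfolding C_def by (rule cs_closed[OF K GK])
  have CN: "C \<subseteq> N" unfolding C_def using cs_min[OF K GK] KN by blast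
  define M where "M = {x\<in>C. U x \<in> C}"
  have zero: "U (\<lambda>_. 0) = (\<lambda>_. 0)"
  proof -
    have z: "(\<lambda>_. 0) \<in> N" by (rule csub_zero[OF N])
    have "U (\<lambda>i. 0 * (\<lambda>_. 0::complex) i) = (\<lambda>i. 0 * U (\<lambda>_. 0) i)"
      by (rule op_scale[OF U z])
    thus ?thesis by simp
  qed
  obtain Cn where Cn: "\<forall>x\<in>N. lnorm (U x) \<le> Cn * lnorm x" using U unfolding op_on_def by blast
  have "closed_subspace M"
    unfolding closed_subspace_def
  proof (intro conjI)
    show "M \<subseteq> l2" using csub_l2[OF C] unfolding M_def by blast
    show "(\<lambda>_. 0) \<in> M" using csub_zero[OF C] zero unfolding M_def by simp
    show "\<forall>x\<in>M. \<forall>y\<in>M. (\<lambda>i. x i + y i) \<in> M"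
    proof (intro ballI)
      fix x y assume "x \<in> M" "y \<in> M"
      moreover have "U (\<lambda>i. x i + y i) = (\<lambda>i. U x i + U y i)"
        using U CN \<open>x \<in> M\<close> \<open>y \<in> M\<close> unfolding op_on_def M_def by blast
      ultimately show "(\<lambda>i. x i + y i) \<in> M" using csub_add[OF C] unfolding M_def by simp
    qed
    show "\<forall>c. \<forall>x\<in>M. (\<lambda>i. c * x i) \<in> M"
    proof (intro allI ballI)
      fix c x assume "x \<in> M"
      moreover have "U (\<lambda>i. c * x i) = (\<lambda>i. c * U x i)"
        using U CN \<open>x \<in> M\<close> unfolding op_on_def M_def by blast
      ultimately show "(\<lambda>i. c * x i) \<in> M" using csub_scale[OF C] unfolding M_def by simp
    qed
    show "\<forall>X x. (\<forall>n. X n \<in> M) \<and> x \<in> l2 \<and> (\<lambda>n. lnorm (\<lambda>i. X n i - x i)) \<longlonglongrightarrow> 0 \<longrightarrow> x \<in> M"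
    proof (intro allI impI)
      fix X x assume a: "(\<forall>n. X n \<in> M) \<and> x \<in> l2 \<and> (\<lambda>n. lnorm (\<lambda>i. X n i - x i)) \<longlonglongrightarrow> 0"
      have XC: "\<forall>n. X n \<in> C" and UXC: "\<forall>n. U (X n) \<in> C" using a unfolding M_def by auto
      have xC: "x \<in> C" using csub_lim[OF C] XC a by blast
      have xN: "x \<in> N" using xC CN by blast
      have Ux: "U x \<in> l2" using U csub_l2[OF N] xN unfolding op_on_def by blast
      have eq: "lnorm (\<lambda>i. U (X n) i - U x i) = lnorm (U (\<lambda>i. X n i - x i))" for n
      proof -
        have "X n \<in> N" using XC CN by blast
        thus ?thesis using op_sub[OF U _ xN N, of "X n"] by simp
      qed
      have sN: "(\<lambda>i. X n i - x i) \<in> N" for n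
      proof -
        have "(\<lambda>i. (-1) * x i) \<in> N" by (rule csub_scale[OF N xN])
        moreover have "X n \<in> N" using XC CN by blast
        ultimately have "(\<lambda>i. X n i + (\<lambda>i. (-1) * x i) i) \<in> N" using csub_add[OF N] by blast
        thus ?thesis by simp
      qed
      have bnd: "lnorm (\<lambda>i. U (X n) i - U x i) \<le> Cn * lnorm (\<lambda>i. X n i - x i)" for n
        using eq Cn sN by simp
      have lim: "(\<lambda>n. Cn * lnorm (\<lambda>i. X n i - x i)) \<longlonglongrightarrow> 0"
        using tendsto_mult_right_zero a by blast
      have "(\<lambda>n. lnorm (\<lambda>i. U (X n) i - U x i)) \<longlonglongrightarrow> 0"
        by (rule real_tendsto_sandwich[OF _ _ tendsto_const lim])
           (auto simp: lnorm_nonneg bnd)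
      hence "U x \<in> C" by (rule csub_lim[OF C UXC Ux])
      thus "x \<in> M" using xC unfolding M_def by blast
    qed
  qed
  moreover have "G \<subseteq> M" using UG cs_base unfolding M_def C_def by blast
  ultimately have "C \<subseteq> M" unfolding C_def by (rule cs_min)
  thus ?thesis unfolding M_def C_def by blast
qed


lemma pow_inv: "\<forall>x\<in>K. B x \<in> K \<Longrightarrow> x \<in> K \<Longrightarrow> (B ^^ m) x \<in> K"
  by (induction m) auto

lemma pow_comm:
  assumes "\<forall>x\<in>K. A x \<in> K" "\<forall>x\<in>K. B x \<in> K" "\<forall>x\<in>K. A (B x) = B (A x)" "x \<in> K"
  shows "A ((B ^^ m) x) = (B ^^ m) (A x)"
  using assms(4)
proof (induction m arbitrary: x)
  case 0 then show ?case by simp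
next
  case (Suc m x)
  have "A ((B ^^ Suc m) x) = A ((B ^^ m) (B x))" by (simp add: funpow_swap1)
  also have "\<dots> = (B ^^ m) (A (B x))" using Suc assms(2) by blast
  also have "\<dots> = (B ^^ m) (B (A x))" using assms(3) Suc by simp
  finally show ?case by (simp add: funpow_swap1)
qed

theorem proposition6p2:
  fixes H :: "('i \<Rightarrow> complex) set"
    and S1 S2 P :: "('i \<Rightarrow> complex) \<Rightarrow> ('i \<Rightarrow> complex)"
  assumes "closed_subspace H"
    and "gamma3_contraction H S1 S2 P"
    and "\<exists>K T1 T2 V. gamma3_isometric_dilation H S1 S2 P K T1 T2 V"
  shows "\<exists>K T1 T2 V. gamma3_isometric_dilation H S1 S2 P K T1 T2 V
                    \<and> minimal_dilation H K T1 T2 V"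
proof -
  obtain K T1 T2 V where D: "gamma3_isometric_dilation H S1 S2 P K T1 T2 V" using assms(3) by blast
  have K: "closed_subspace K" and HK: "H \<subseteq> K" and I: "gamma3_isometry K T1 T2 V"
    and E: "\<forall>m1 m2 n. \<forall>h\<in>H.
        orth_proj H ((T1 ^^ m1) ((T2 ^^ m2) ((V ^^ n) h))) = (S1 ^^ m1) ((S2 ^^ m2) ((P ^^ n) h))"
    using D unfolding gamma3_isometric_dilation_def by auto
  obtain N U1 U2 U3 where N: "closed_subspace N" and KN: "K \<subseteq> N" and Un: "gamma3_unitary N U1 U2 U3"
    and UK: "\<forall>x\<in>K. U1 x \<in> K \<and> U2 x \<in> K \<and> U3 x \<in> K"
    and TU: "\<forall>x\<in>K. T1 x = U1 x \<and> T2 x = U2 x \<and> V x = U3 x"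
    using I unfolding gamma3_isometry_def by blast
  have op1: "op_on N U1" and op2: "op_on N U2" and op3: "op_on N U3"
    and c12: "commute_on N U1 U2" and c13: "commute_on N U1 U3" and c23: "commute_on N U2 U3"
    using Un unfolding gamma3_unitary_def normal_on_def by auto
  have i1: "\<forall>x\<in>K. T1 x \<in> K" and i2: "\<forall>x\<in>K. T2 x \<in> K" and i3: "\<forall>x\<in>K. V x \<in> K"
    using UK TU by auto
  have t12: "\<forall>x\<in>K. T2 (T1 x) = T1 (T2 x)"
  proof
    fix x assume x: "x \<in> K"
    hence "x \<in> N" using KN by blast
    thus "T2 (T1 x) = T1 (T2 x)" using x UK TU c12 unfolding commute_on_def by simp
  qed
  have t13: "\<forall>x\<in>K. V (T1 x) = T1 (V x)"
  proof
    fix x assume x: "x \<in> K"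
    hence "x \<in> N" using KN by blast
    thus "V (T1 x) = T1 (V x)" using x UK TU c13 unfolding commute_on_def by simp
  qed
  have t23: "\<forall>x\<in>K. V (T2 x) = T2 (V x)"
  proof
    fix x assume x: "x \<in> K"
    hence "x \<in> N" using KN by blast
    thus "V (T2 x) = T2 (V x)" using x UK TU c23 unfolding commute_on_def by simp
  qed
  define G where "G = {(T1 ^^ m1) ((T2 ^^ m2) ((V ^^ n) h)) | m1 m2 n h. h \<in> H}"
  define K0 where "K0 = closed_span G"
  have GK: "G \<subseteq> K"
    unfolding G_def using HK pow_inv[OF i1] pow_inv[OF i2] pow_inv[OF i3] by blast
  have K0: "closed_subspace K0" unfolding K0_def by (rule cs_closed[OF K GK])
  have K0K: "K0 \<subseteq> K" unfolding K0_def by (rule cs_min[OF K GK])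
  have GK0: "G \<subseteq> K0" unfolding K0_def by (rule cs_base)
  have HK0: "H \<subseteq> K0"
  proof
    fix h assume "h \<in> H"
    hence "(T1 ^^ 0) ((T2 ^^ 0) ((V ^^ 0) h)) \<in> G" unfolding G_def by blast
    thus "h \<in> K0" using GK0 by auto
  qed
  have G1: "\<forall>g\<in>G. T1 g \<in> G"
  proof
    fix g assume "g \<in> G"
    then obtain m1 m2 n h where g: "g = (T1 ^^ m1) ((T2 ^^ m2) ((V ^^ n) h))" "h \<in> H"
      unfolding G_def by blast
    have "T1 g = (T1 ^^ Suc m1) ((T2 ^^ m2) ((V ^^ n) h))" using g by simp
    thus "T1 g \<in> G" using g unfolding G_def by blast
  qed
  have G2: "\<forall>g\<in>G. T2 g \<in> G"
  proof
    fix g assume "g \<in> G"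
    then obtain m1 m2 n h where g: "g = (T1 ^^ m1) ((T2 ^^ m2) ((V ^^ n) h))" "h \<in> H"
      unfolding G_def by blast
    have yK: "(T2 ^^ m2) ((V ^^ n) h) \<in> K"
      using g HK pow_inv[OF i2] pow_inv[OF i3] by blast
    have "T2 g = (T1 ^^ m1) (T2 ((T2 ^^ m2) ((V ^^ n) h)))"
      using g pow_comm[OF i2 i1 t12 yK] by simp
    also have "\<dots> = (T1 ^^ m1) ((T2 ^^ Suc m2) ((V ^^ n) h))" by simp
    finally show "T2 g \<in> G" using g unfolding G_def by blast
  qed
  have G3: "\<forall>g\<in>G. V g \<in> G"
  proof
    fix g assume "g \<in> G"
    then obtain m1 m2 n h where g: "g = (T1 ^^ m1) ((T2 ^^ m2) ((V ^^ n) h))" "h \<in> H"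
      unfolding G_def by blast
    have zK: "(V ^^ n) h \<in> K" using g HK pow_inv[OF i3] by blast
    have yK: "(T2 ^^ m2) ((V ^^ n) h) \<in> K"
      using zK pow_inv[OF i2] by blast
    have "V g = (T1 ^^ m1) (V ((T2 ^^ m2) ((V ^^ n) h)))"
      using g pow_comm[OF i3 i1 t13 yK] by simp
    also have "\<dots> = (T1 ^^ m1) ((T2 ^^ m2) (V ((V ^^ n) h)))"
      using pow_comm[OF i3 i2 t23 zK] by simp
    also have "\<dots> = (T1 ^^ m1) ((T2 ^^ m2) ((V ^^ Suc n) h))" by simp
    finally show "V g \<in> G" using g unfolding G_def by blast
  qed
  have inv1: "\<forall>x\<in>K0. U1 x \<in> K0"
    unfolding K0_def
  proof (rule cs_invariant[OF N op1 K KN GK], intro ballI)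
    fix g assume g: "g \<in> G"
    hence "U1 g = T1 g" using GK TU by auto
    thus "U1 g \<in> closed_span G" using G1 g cs_base by auto
  qed
  have inv2: "\<forall>x\<in>K0. U2 x \<in> K0"
    unfolding K0_def
  proof (rule cs_invariant[OF N op2 K KN GK], intro ballI)
    fix g assume g: "g \<in> G"
    hence "U2 g = T2 g" using GK TU by auto
    thus "U2 g \<in> closed_span G" using G2 g cs_base by auto
  qed
  have inv3: "\<forall>x\<in>K0. U3 x \<in> K0"
    unfolding K0_def
  proof (rule cs_invariant[OF N op3 K KN GK], intro ballI)
    fix g assume g: "g \<in> G"
    hence "U3 g = V g" using GK TU by auto
    thus "U3 g \<in> closed_span G" using G3 g cs_base by auto
  qed
  have A: "\<forall>x\<in>K0. U1 x \<in> K0 \<and> U2 x \<in> K0 \<and> U3 x \<in> K0" using inv1 inv2 inv3 by blast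
  have B: "\<forall>x\<in>K0. T1 x = U1 x \<and> T2 x = U2 x \<and> V x = U3 x" using TU K0K by blast
  have KN0: "K0 \<subseteq> N" using K0K KN by blast
  have "gamma3_isometry K0 T1 T2 V"
    unfolding gamma3_isometry_def using K0 N KN0 Un A B by blast
  hence "gamma3_isometric_dilation H S1 S2 P K0 T1 T2 V"
    unfolding gamma3_isometric_dilation_def using K0 HK0 E by (intro conjI) auto
  moreover have "minimal_dilation H K0 T1 T2 V"
    unfolding minimal_dilation_def K0_def G_def ..
  ultimately show ?thesis by blast
qed

end
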